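(* Let $Z$ be admissible with respect to $Z^\star$ and let $(\alpha_m)$ be a sequence witnessing property (4b) of admissibility. Suppose that $\hat X$ is a block-independent process with blocklength $b$. Then \[ \left|I(\hat X;Z^\star(\hat X))-\frac{I(\hat X_1^b;Z^\star(\hat X_1^b))}{b}\right|\le\alpha_b/b, \] where $\lim_{b\to\infty}\alpha_b/b=0$.
   Context: A process $X=(X_i)_{i\in\mathbb N}$ (with $X_m^n=(X_m,\dots,X_n)$) is block-independent with blocklength $b$ if for every $t\ge1$ and $n=tb$, $\Pr[X_1^n=x_1^n]=\prod_{i=1}^t\Pr[X_1^b=x_{(i-1)b+1}^{ib}]$. A channel $Z$ with finite input alphabet assigns to each finite input string $x$ a random output $Z(x)$ in a discrete set; applying a channel to several inputs means independent applications. $A\to B\to C$ denotes a Markov chain; logs base 2. For a process $P$, $I(P;Z(P))=\liminf_n I(P_1^n;Z(P_1^n))/n$. $Z$ is admissible with respect to $Z^\star$ (same input alphabet) if: (1) there is $c>0$ with $H(Z^\star(X_1^n))\le cn$ for every process $X$ and $n\ge1$; (2) $I(X;Z(X))=I(X;Z^\star(X))$ for every process $X$; (3) for every $X$ and $1\le m\le n$: $X_1^n\to Z^\star(X_1^m),Z^\star(X_{m+1}^n)\to Z^\star(X_1^n)$; (4a) for every integer $\tau\ge1$ there is a non-decreasing $\gamma_m=o(m)$ with $\sum_m\gamma_m/m^2<\infty$ such that for every $X$ and $n\ge\tau$ there are $W_{\mathrm{pre}},W_{\mathrm{suf}}$ with $X_1^n\to Z^\star(X_1^n),W_{\mathrm{pre}}\to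 Z^\star(X_1^\tau),Z^\star(X_{\tau+1}^n)$, $X_1^n\to Z^\star(X_1^n),W_{\mathrm{suf}}\to Z^\star(X_1^{n-\tau}),Z^\star(X_{n-\tau+1}^n)$, $H(W_{\mathrm{pre}}),H(W_{\mathrm{suf}})\le\gamma_n$; (4b) there is a sequence $\alpha_m=o(m)$ such that for every $X$, $b$, $t$ there is $W$ with $X_1^{tb}\to Z^\star(X_1^{tb}),W\to Z^\star(X_1^b),\dots,Z^\star(X_{(t-1)b+1}^{tb})$ and $H(W)\le t\alpha_b$; (5) there is $\beta_m=o(m)$ such that for every $X$, $b$, $t$ there are $Y$ with $X_1^{tb}\to Z^\star(X_1^b),\dots,Z^\star(X_{(t-1)b+1}^{tb})\to Y$ and a deterministic $\phi$ with $Z^\star(X_1^{tb})=\phi(Z^\star(X_1^b),\dots,Z^\star(X_{(t-1)b+1}^{tb}),Y)$ and $\max_z\log|\phi^{-1}(z)|\le t\beta_b$. *)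

theory Defs
  imports "HOL-Probability.Probability"
begin

text \<open>Shannon entropy of a discrete distribution; may be infinite, hence extended real.\<close>
definition entropy_pmf :: "'x pmf \<Rightarrow> ereal" where
  "entropy_pmf p = enn2ereal (\<integral>\<^sup>+ x. ennreal (- pmf p x * log 2 (pmf p x)) \<partial>count_space UNIV)"

definition mutual_info_pmf :: "('x \<times> 'y) pmf \<Rightarrow> real" where
  "mutual_info_pmf J = infsum (\<lambda>(x, y). pmf J (x, y) *
      log 2 (pmf J (x, y) / (pmf (map_pmf fst J) x * pmf (map_pmf snd J) y))) UNIV"

definition markov_chain :: "('x \<times> 'y \<times> 'z) pmf \<Rightarrow> bool" where
  "markov_chain J \<longleftrightarrow> (\<forall>a b c.
     pmf J (a, b, c) * pmf (map_pmf (\<lambda>(a, b, c). b) J) b =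
     pmf (map_pmf (\<lambda>(a, b, c). (a, b)) J) (a, b) * pmf (map_pmf (\<lambda>(a, b, c). (b, c)) J) (b, c))"

definition chan_joint :: "'x pmf \<Rightarrow> ('x \<Rightarrow> 'o pmf) \<Rightarrow> ('x \<times> 'o) pmf" where
  "chan_joint p Z = bind_pmf p (\<lambda>x. map_pmf (Pair x) (Z x))"

definition chan_MI :: "'x pmf \<Rightarrow> ('x \<Rightarrow> 'o pmf) \<Rightarrow> real" where
  "chan_MI p Z = mutual_info_pmf (chan_joint p Z)"

fun indep_apply :: "('x \<Rightarrow> 'o pmf) \<Rightarrow> 'x list \<Rightarrow> 'o list pmf" where
  "indep_apply Z [] = return_pmf []"
| "indep_apply Z (x # xs) = bind_pmf (Z x) (\<lambda>z. map_pmf (Cons z) (indep_apply Z xs))"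

text \<open>A process over alphabet 'a is given by the laws P n of its prefixes X_1^n,
  which must be consistent.\<close>
definition process :: "(nat \<Rightarrow> 'a list pmf) \<Rightarrow> bool" where
  "process P \<longleftrightarrow> (\<forall>n. \<forall>x\<in>set_pmf (P n). length x = n) \<and>
                   (\<forall>m n. m \<le> n \<longrightarrow> map_pmf (take m) (P n) = P m)"

definition proc_MI :: "(nat \<Rightarrow> 'a list pmf) \<Rightarrow> ('a list \<Rightarrow> 'o pmf) \<Rightarrow> real" where
  "proc_MI P Z = real_of_ereal (liminf (\<lambda>n. ereal (chan_MI (P n) Z / real n)))"

definition blocks :: "nat \<Rightarrow> nat \<Rightarrow> 'a list \<Rightarrow> 'a list list" where
  "blocks b t x = map (\<lambda>i. take b (drop (i * b) x)) [0..<t]"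

definition block_independent :: "(nat \<Rightarrow> 'a list pmf) \<Rightarrow> nat \<Rightarrow> bool" where
  "block_independent P b \<longleftrightarrow> (\<forall>t\<ge>1. \<forall>x. length x = t * b \<longrightarrow>
      pmf (P (t * b)) x = prod_list (map (pmf (P b)) (blocks b t x)))"

definition pieces_joint :: "'x pmf \<Rightarrow> ('x \<Rightarrow> 'o pmf) \<Rightarrow> ('x \<Rightarrow> 'x list) \<Rightarrow> ('x \<times> 'o list) pmf" where
  "pieces_joint p Z f = chan_joint p (\<lambda>x. indep_apply Z (f x))"

text \<open>An auxiliary variable W (discrete, encoded in nat) on a coupling of (X, Z(X), Z(pieces of X))
  such that X \<rightarrow> (Z(X), W) \<rightarrow> Z(pieces) with H(W) \<le> bound.\<close>
definition aux_recovers ::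
  "'x pmf \<Rightarrow> ('x \<Rightarrow> 'o pmf) \<Rightarrow> ('x \<Rightarrow> 'x list) \<Rightarrow> real \<Rightarrow> bool" where
  "aux_recovers p Z f c \<longleftrightarrow> (\<exists>K :: ('x \<times> 'o \<times> 'o list \<times> nat) pmf.
      map_pmf (\<lambda>(x, z, zs, w). (x, z)) K = chan_joint p Z \<and>
      map_pmf (\<lambda>(x, z, zs, w). (x, zs)) K = pieces_joint p Z f \<and>
      markov_chain (map_pmf (\<lambda>(x, z, zs, w). (x, (z, w), zs)) K) \<and>
      entropy_pmf (map_pmf (\<lambda>(x, z, zs, w). w) K) \<le> ereal c)"

definition adm1 :: "('a list \<Rightarrow> 'p pmf) \<Rightarrow> bool" where
  "adm1 Zs \<longleftrightarrow> (\<exists>c>0. \<forall>P :: nat \<Rightarrow> 'a list pmf. process P \<longrightarrow>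
      (\<forall>n\<ge>1. entropy_pmf (bind_pmf (P n) Zs) \<le> ereal (c * real n)))"

definition adm2 :: "('a list \<Rightarrow> 'o pmf) \<Rightarrow> ('a list \<Rightarrow> 'p pmf) \<Rightarrow> bool" where
  "adm2 Z Zs \<longleftrightarrow> (\<forall>P :: nat \<Rightarrow> 'a list pmf. process P \<longrightarrow> proc_MI P Z = proc_MI P Zs)"

definition adm3 :: "('a list \<Rightarrow> 'p pmf) \<Rightarrow> bool" where
  "adm3 Zs \<longleftrightarrow> (\<forall>P :: nat \<Rightarrow> 'a list pmf. \<forall>m n. process P \<and> 1 \<le> m \<and> m \<le> n \<longrightarrow>
     (\<exists>K :: ('a list \<times> 'p list \<times> 'p) pmf.
        map_pmf (\<lambda>(x, zs, z). (x, zs)) K = pieces_joint (P n) Zs (\<lambda>x. [take m x, drop m x]) \<and>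
        map_pmf (\<lambda>(x, zs, z). (x, z)) K = chan_joint (P n) Zs \<and>
        markov_chain K))"

definition adm4a :: "('a list \<Rightarrow> 'p pmf) \<Rightarrow> bool" where
  "adm4a Zs \<longleftrightarrow> (\<forall>\<tau>::nat. \<tau> \<ge> 1 \<longrightarrow> (\<exists>\<gamma> :: nat \<Rightarrow> real.
     mono \<gamma> \<and> (\<lambda>m. \<gamma> m / real m) \<longlonglongrightarrow> 0 \<and> summable (\<lambda>m. \<gamma> m / (real m)^2) \<and>
     (\<forall>P :: nat \<Rightarrow> 'a list pmf. \<forall>n. process P \<and> n \<ge> \<tau> \<longrightarrow>
        aux_recovers (P n) Zs (\<lambda>x. [take \<tau> x, drop \<tau> x]) (\<gamma> n) \<and>
        aux_recovers (P n) Zs (\<lambda>x. [take (n - \<tau>) x, drop (n - \<tau>) x]) (\<gamma> n))))"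

definition adm4b :: "('a list \<Rightarrow> 'p pmf) \<Rightarrow> (nat \<Rightarrow> real) \<Rightarrow> bool" where
  "adm4b Zs \<alpha> \<longleftrightarrow> (\<lambda>m. \<alpha> m / real m) \<longlonglongrightarrow> 0 \<and>
     (\<forall>P :: nat \<Rightarrow> 'a list pmf. \<forall>b t. process P \<and> b \<ge> 1 \<and> t \<ge> 1 \<longrightarrow>
        aux_recovers (P (t * b)) Zs (blocks b t) (real t * \<alpha> b))"

definition adm5 :: "('a list \<Rightarrow> 'p pmf) \<Rightarrow> bool" where
  "adm5 Zs \<longleftrightarrow> (\<exists>\<beta> :: nat \<Rightarrow> real. (\<lambda>m. \<beta> m / real m) \<longlonglongrightarrow> 0 \<and>
     (\<forall>P :: nat \<Rightarrow> 'a list pmf. \<forall>b t. process P \<and> b \<ge> 1 \<and> t \<ge> 1 \<longrightarrow>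
       (\<exists>(K :: ('a list \<times> 'p list \<times> nat) pmf) (\<phi> :: 'p list \<Rightarrow> nat \<Rightarrow> 'p).
          map_pmf (\<lambda>(x, zs, y). (x, zs)) K = pieces_joint (P (t * b)) Zs (blocks b t) \<and>
          markov_chain K \<and>
          map_pmf (\<lambda>(x, zs, y). (x, \<phi> zs y)) K = chan_joint (P (t * b)) Zs \<and>
          (\<forall>zs y. (zs, y) \<in> set_pmf (map_pmf snd K) \<longrightarrow>
             (let S = {(zs', y'). (zs', y') \<in> set_pmf (map_pmf snd K) \<and> \<phi> zs' y' = \<phi> zs y}
              in finite S \<and> log 2 (real (card S)) \<le> real t * \<beta> b)))))"

definition admissible :: "('a list \<Rightarrow> 'o pmf) \<Rightarrow> ('a list \<Rightarrow> 'p pmf) \<Rightarrow> bool" where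
  "admissible Z Zs \<longleftrightarrow> adm1 Zs \<and> adm2 Z Zs \<and> adm3 Zs \<and> adm4a Zs \<and>
     (\<exists>\<alpha>. adm4b Zs \<alpha>) \<and> adm5 Zs"

end

theory Submission
  imports Defs
begin

definition pd :: "'k pmf \<Rightarrow> ('k \<Rightarrow> 'v) \<Rightarrow> 'v \<Rightarrow> real" where
  "pd K V v = pmf (map_pmf V K) v"

lemma pd_measure: "pd K V v = measure_pmf.prob K {k. V k = v}"
  by (simp add: pd_def pmf_map vimage_def)

lemma pd_pos: "k \<in> set_pmf K \<Longrightarrow> pd K V (V k) > 0"
  by (simp add: pd_def pmf_positive)

lemma pd_pos': "k \<in> set_pmf K \<Longrightarrow> v = V k \<Longrightarrow> pd K V v > 0"
  by (simp only: pd_pos)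

lemma pd_le1: "pd K V v \<le> 1" by (simp add: pd_def pmf_le_1)

lemma infsum_pmf_eq_integral:
  fixes F :: "'a \<Rightarrow> real"
  assumes "integrable (measure_pmf J) F"
  shows "infsum (\<lambda>z. pmf J z * F z) UNIV = measure_pmf.expectation J F"
proof -
  have i: "integrable (count_space UNIV) (\<lambda>z. pmf J z * F z)"
    using assms unfolding measure_pmf_eq_density
    by (subst (asm) integrable_density) auto
  have "measure_pmf.expectation J F = (\<integral>z. pmf J z * F z \<partial>count_space UNIV)"
    unfolding measure_pmf_eq_density by (subst integral_density) auto
  also have "\<dots> = infsetsum (\<lambda>z. pmf J z * F z) UNIV" by (simp add: infsetsum_def)
  also have "\<dots> = infsum (\<lambda>z. pmf J z * F z) UNIV"
    by (rule infsetsum_infsum) (simp add: abs_summable_on_def i)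
  finally show ?thesis by simp
qed

lemma pmf_le_pmf_map: "pmf J z \<le> pmf (map_pmf f J) (f z)"
proof -
  have "pmf J z = measure_pmf.prob J {z}" by (simp add: measure_pmf_single)
  also have "\<dots> \<le> measure_pmf.prob J (f -` {f z})"
    by (rule measure_pmf.finite_measure_mono) auto
  finally show ?thesis by (simp add: pmf_map)
qed

lemma neg_u_log_le: assumes "0 < u" "u \<le> 1" shows "- u * log 2 u \<le> 1 / ln 2"
proof -
  have "ln (1/u) \<le> 1/u - 1" using assms by (intro ln_le_minus_one) auto
  hence "- ln u \<le> 1/u - 1" using assms by (simp add: ln_div)
  hence "u * (- ln u) \<le> u * (1/u - 1)" using assms by (intro mult_left_mono) auto
  also have "\<dots> \<le> 1" using assms by (simp add: field_simps)
  finally have "- (u * ln u) \<le> 1" by simp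
  hence "- (u * ln u) / ln 2 \<le> 1 / ln 2" by (rule divide_right_mono) simp
  thus ?thesis by (simp add: log_def)
qed

definition MIF :: "('x \<times> 'y) pmf \<Rightarrow> 'x \<times> 'y \<Rightarrow> real" where
  "MIF J z = log 2 (pmf J z / (pmf (map_pmf fst J) (fst z) * pmf (map_pmf snd J) (snd z)))"

lemma MI_repr:
  fixes J :: "('x \<times> 'y) pmf"
  assumes fin: "finite (set_pmf (map_pmf fst J))"
  shows "integrable J (MIF J)" "mutual_info_pmf J = measure_pmf.expectation J (MIF J)"
proof -
  define S where "S = set_pmf (map_pmf fst J)"
  define pX where "pX = pmf (map_pmf fst J)"
  define pY where "pY = pmf (map_pmf snd J)"
  define G where "G z = - log 2 (pmf J z / pY (snd z))" for z
  define M where "M = (\<Sum>x\<in>S. - log 2 (pX x))"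
  have S_ne: "S \<noteq> {}" by (simp add: S_def set_pmf_not_empty)
  have finS: "finite S" using fin by (simp add: S_def)
  have pos: "pmf J z > 0" "pX (fst z) > 0" "pY (snd z) > 0" "fst z \<in> S"
     "pmf J z \<le> pX (fst z)" "pmf J z \<le> pY (snd z)" if "z \<in> set_pmf J" for z
    using that pmf_le_pmf_map[of J z fst] pmf_le_pmf_map[of J z snd]
    by (auto simp: pX_def pY_def S_def pmf_positive)
  have Mb: "- log 2 (pX x) \<le> M" if "x \<in> S" for x
  proof -
    have nn: "0 \<le> - log 2 (pX b)" if "b \<in> S" for b
      using that by (simp add: S_def pX_def pmf_le_1 pmf_positive)
    have "- log 2 (pX x) = (\<Sum>x\<in>{x}. - log 2 (pX x))" by simp
    also have "\<dots> \<le> M" unfolding M_def using that finS nn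
      by (intro sum_mono2) auto
    finally show ?thesis .
  qed
  have G_nn: "G z \<ge> 0" if "z \<in> set_pmf J" for z
    using pos[OF that] by (simp add: G_def)
  have JG: "ennreal (pmf J z) * ennreal (G z) \<le> ennreal (1 / ln 2 * card S) * ennreal (pmf (pair_pmf (pmf_of_set S) (map_pmf snd J)) z)" for z
  proof (cases "z \<in> set_pmf J")
    case True
    note p = pos[OF True]
    have "pmf J z * G z = pY (snd z) * (- (pmf J z / pY (snd z)) * log 2 (pmf J z / pY (snd z)))"
      using p by (simp add: G_def)
    also have "\<dots> \<le> pY (snd z) * (1 / ln 2)"
      using p by (intro mult_left_mono neg_u_log_le) auto
    also have "\<dots> = (1 / ln 2 * card S) * pmf (pair_pmf (pmf_of_set S) (map_pmf snd J)) z"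
      using p finS S_ne by (cases z) (simp add: pmf_pair pY_def)
    finally show ?thesis using G_nn[OF True]
      by (simp add: ennreal_mult'' [symmetric] flip: ennreal_mult)
  next
    case False thus ?thesis by (simp add: set_pmf_iff)
  qed
  have "(\<integral>\<^sup>+z. ennreal (G z) \<partial>J) = (\<integral>\<^sup>+z. ennreal (pmf J z) * ennreal (G z) \<partial>count_space UNIV)"
    by (rule nn_integral_measure_pmf)
  also have "\<dots> \<le> (\<integral>\<^sup>+z. ennreal (1 / ln 2 * card S) * ennreal (pmf (pair_pmf (pmf_of_set S) (map_pmf snd J)) z) \<partial>count_space UNIV)"
    by (intro nn_integral_mono JG)
  also have "\<dots> = ennreal (1 / ln 2 * card S) * (\<integral>\<^sup>+z. ennreal (pmf (pair_pmf (pmf_of_set S) (map_pmf snd J)) z) \<partial>count_space UNIV)"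
    by (rule nn_integral_cmult) auto
  also have "\<dots> < \<infinity>" by (simp add: nn_integral_pmf_eq_1 ennreal_mult_less_top)
  finally have Gfin: "(\<integral>\<^sup>+z. ennreal (G z) \<partial>J) < \<infinity>" .
  have intG: "integrable J G"
    by (rule integrableI_nonneg) (use Gfin in \<open>auto simp: AE_measure_pmf_iff G_nn\<close>)
  have Fbound: "norm (MIF J z) \<le> norm (G z + M)" if "z \<in> set_pmf J" for z
  proof -
    note p = pos[OF that]
    have "MIF J z = log 2 (pmf J z / pY (snd z)) - log 2 (pX (fst z))"
      using p by (simp add: MIF_def pX_def pY_def log_divide log_mult)
    moreover have "log 2 (pmf J z / pY (snd z)) \<le> 0" using p by simp
    moreover have "- log 2 (pX (fst z)) \<ge> 0" using p by (simp add: pX_def pmf_le_1)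
    ultimately show ?thesis using Mb[OF p(4)] G_nn[OF that] by (simp add: G_def)
  qed
  show intF: "integrable J (MIF J)"
  proof (rule Bochner_Integration.integrable_bound[of _ "\<lambda>z. G z + M"])
    show "AE z in J. norm (MIF J z) \<le> norm (G z + M)"
      unfolding AE_measure_pmf_iff using Fbound by blast
  qed (use intG in auto)
  have "mutual_info_pmf J = infsum (\<lambda>z. pmf J z * MIF J z) UNIV"
    unfolding mutual_info_pmf_def MIF_def by (intro arg_cong2[where f=infsum] ext) (auto simp: case_prod_beta)
  also have "\<dots> = measure_pmf.expectation J (MIF J)" by (rule infsum_pmf_eq_integral[OF intF])
  finally show "mutual_info_pmf J = measure_pmf.expectation J (MIF J)" .
qed

definition MIK :: "'k pmf \<Rightarrow> ('k \<Rightarrow> 'a) \<Rightarrow> ('k \<Rightarrow> 'b) \<Rightarrow> real" where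
  "MIK K A B = mutual_info_pmf (map_pmf (\<lambda>k. (A k, B k)) K)"

definition MIFK :: "'k pmf \<Rightarrow> ('k \<Rightarrow> 'a) \<Rightarrow> ('k \<Rightarrow> 'b) \<Rightarrow> 'k \<Rightarrow> real" where
  "MIFK K A B k = log 2 (pd K (\<lambda>k. (A k, B k)) (A k, B k) / (pd K A (A k) * pd K B (B k)))"

lemma MIK_repr:
  assumes "finite (A ` set_pmf K)"
  shows "integrable K (MIFK K A B)" "MIK K A B = measure_pmf.expectation K (MIFK K A B)"
proof -
  let ?J = "map_pmf (\<lambda>k. (A k, B k)) K"
  have m1: "map_pmf fst ?J = map_pmf A K" "map_pmf snd ?J = map_pmf B K"
    by (simp_all add: map_pmf_comp)
  have fin: "finite (set_pmf (map_pmf fst ?J))" using assms by (simp add: m1)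
  have eq: "(\<lambda>k. MIF ?J (A k, B k)) = MIFK K A B"
    by (rule ext) (simp add: MIF_def MIFK_def pd_def m1)
  show "integrable K (MIFK K A B)"
    using MI_repr(1)[OF fin] eq by simp
  show "MIK K A B = measure_pmf.expectation K (MIFK K A B)"
    using MI_repr(2)[OF fin] eq by (simp add: MIK_def)
qed

lemma gibbs:
  fixes f :: "'k \<Rightarrow> real"
  assumes pos: "\<And>k. k \<in> set_pmf K \<Longrightarrow> f k > 0"
    and le1: "(\<integral>\<^sup>+k. ennreal (f k) \<partial>K) \<le> 1"
    and int: "integrable K (\<lambda>k. log 2 (f k))"
  shows "measure_pmf.expectation K (\<lambda>k. log 2 (f k)) \<le> 0"
proof -
  have fin: "(\<integral>\<^sup>+k. ennreal (f k) \<partial>K) < \<infinity>"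
    using le1 by (simp add: le_less_trans)
  have intf: "integrable K f"
    by (rule integrableI_nonneg) (use fin pos in \<open>auto simp: AE_measure_pmf_iff less_imp_le\<close>)
  have Ef: "measure_pmf.expectation K f \<le> 1"
  proof -
    have "measure_pmf.expectation K f = enn2real (\<integral>\<^sup>+k. ennreal (f k) \<partial>K)"
      by (rule integral_eq_nn_integral) (use pos in \<open>auto simp: AE_measure_pmf_iff less_imp_le\<close>)
    also have "\<dots> \<le> enn2real 1" by (rule enn2real_mono[OF le1]) simp
    finally show ?thesis by simp
  qed
  have pw: "log 2 (f k) \<le> (f k - 1) / ln 2" if "k \<in> set_pmf K" for k
  proof -
    have "ln (f k) \<le> f k - 1" using pos[OF that] by (rule ln_le_minus_one)
    thus ?thesis by (simp add: log_def divide_right_mono)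
  qed
  have "measure_pmf.expectation K (\<lambda>k. log 2 (f k)) \<le> measure_pmf.expectation K (\<lambda>k. (f k - 1) / ln 2)"
    by (rule integral_mono_AE) (use int intf pw in \<open>auto simp: AE_measure_pmf_iff\<close>)
  also have "\<dots> = (measure_pmf.expectation K f - 1) / ln 2"
    using intf by (simp add: Bochner_Integration.integral_diff)
  also have "\<dots> \<le> 0" using Ef by (simp add: divide_nonpos_pos)
  finally show ?thesis .
qed

lemma ratio_le1:
  assumes le: "\<And>k. k \<in> set_pmf K \<Longrightarrow> f k \<le> pmf L (T k) / pmf (map_pmf T K) (T k)"
  shows "(\<integral>\<^sup>+k. ennreal (f k) \<partial>K) \<le> 1"
proof -
  have "(\<integral>\<^sup>+k. ennreal (f k) \<partial>K) \<le> (\<integral>\<^sup>+k. ennreal (pmf L (T k) / pmf (map_pmf T K) (T k)) \<partial>K)"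
    by (intro nn_integral_mono_AE) (auto simp: AE_measure_pmf_iff le ennreal_leI)
  also have "\<dots> = (\<integral>\<^sup>+m. ennreal (pmf L m / pmf (map_pmf T K) m) \<partial>map_pmf T K)" by simp
  also have "\<dots> = (\<integral>\<^sup>+m. ennreal (pmf (map_pmf T K) m) * ennreal (pmf L m / pmf (map_pmf T K) m) \<partial>count_space UNIV)"
    by (rule nn_integral_measure_pmf)
  also have "\<dots> \<le> (\<integral>\<^sup>+m. ennreal (pmf L m) \<partial>count_space UNIV)"
  proof (intro nn_integral_mono)
    fix m
    show "ennreal (pmf (map_pmf T K) m) * ennreal (pmf L m / pmf (map_pmf T K) m) \<le> ennreal (pmf L m)"
    proof (cases "pmf (map_pmf T K) m = 0")
      case False
      thus ?thesis by (simp add: ennreal_mult[symmetric])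
    qed simp
  qed
  also have "\<dots> = 1" by (simp add: nn_integral_pmf_eq_1)
  finally show ?thesis .
qed

lemma measure_cond_pmf:
  assumes "set_pmf K \<inter> S \<noteq> {}"
  shows "measure_pmf.prob (cond_pmf K S) X = measure_pmf.prob K (S \<inter> X) / measure_pmf.prob K S"
  unfolding cond_pmf.rep_eq[OF assms]
  by (rule measure_uniform_measure) (use assms in \<open>auto simp: emeasure_measure_pmf_not_zero\<close>)

definition cp :: "'k pmf \<Rightarrow> ('k \<Rightarrow> 'u) \<Rightarrow> ('k \<Rightarrow> 'a) \<Rightarrow> ('k \<Rightarrow> 'b) \<Rightarrow> ('a \<times> 'b \<times> 'u) pmf" where
  "cp K U A B = bind_pmf (map_pmf U K) (\<lambda>u. map_pmf (\<lambda>(a,b). (a,b,u))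
      (pair_pmf (map_pmf A (cond_pmf K {k. U k = u})) (map_pmf B (cond_pmf K {k. U k = u}))))"

lemma pmf_cp:
  "pmf (cp K U A B) (a,b,u) = pd K (\<lambda>k. (A k, U k)) (a,u) * pd K (\<lambda>k. (B k, U k)) (b,u) / pd K U u"
proof -
  define F where "F u' = map_pmf (\<lambda>(a,b). (a,b,u'))
      (pair_pmf (map_pmf A (cond_pmf K {k. U k = u'})) (map_pmf B (cond_pmf K {k. U k = u'})))" for u'
  have z: "pmf (F u') (a,b,u) = 0" if "u' \<noteq> u" for u'
  proof -
    have "(\<lambda>(a',b'). (a',b',u')) -` {(a,b,u)} = {}" using that by auto
    thus ?thesis by (simp add: F_def pmf_map)
  qed
  have "pmf (cp K U A B) (a,b,u) = (\<integral>u'. pmf (F u') (a,b,u) \<partial>map_pmf U K)"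
    by (simp add: cp_def pmf_bind F_def)
  also have "\<dots> = (\<Sum>u'\<in>{u}. pmf (map_pmf U K) u' * pmf (F u') (a,b,u))"
    using integral_measure_pmf[of "{u}" "map_pmf U K" "\<lambda>u'. pmf (F u') (a,b,u)"] z by auto
  also have "\<dots> = pd K U u * pmf (F u) (a,b,u)" by (simp add: pd_def)
  also have "\<dots> = pd K (\<lambda>k. (A k, U k)) (a,u) * pd K (\<lambda>k. (B k, U k)) (b,u) / pd K U u"
  proof (cases "pd K U u = 0")
    case True thus ?thesis by simp
  next
    case False
    hence "u \<in> set_pmf (map_pmf U K)" unfolding pd_def by (simp only: set_pmf_iff) simp
    hence ne: "set_pmf K \<inter> {k. U k = u} \<noteq> {}" by auto
    have inj: "inj (\<lambda>(a',b'). (a',b',u))" by (auto simp: inj_def)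
    have "pmf (F u) (a,b,u) = pmf (map_pmf A (cond_pmf K {k. U k = u})) a * pmf (map_pmf B (cond_pmf K {k. U k = u})) b"
      unfolding F_def using pmf_map_inj'[OF inj, of _ "(a,b)"] by (simp add: pmf_pair)
    also have "\<dots> = (pd K (\<lambda>k. (A k, U k)) (a,u) / pd K U u) * (pd K (\<lambda>k. (B k, U k)) (b,u) / pd K U u)"
      unfolding pmf_map measure_cond_pmf[OF ne] pd_measure
      by (simp add: Int_def vimage_def conj_commute)
    finally show ?thesis using False by (simp add: field_simps)
  qed
  finally show ?thesis .
qed

lemma gibbs_gen:
  fixes f g h :: "'k \<Rightarrow> real"
  assumes pos: "\<And>k. k \<in> set_pmf K \<Longrightarrow> f k > 0"
    and le1: "(\<integral>\<^sup>+k. ennreal (f k) \<partial>K) \<le> 1"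
    and intg: "integrable K g" and inth: "integrable K h"
    and pw: "\<And>k. k \<in> set_pmf K \<Longrightarrow> g k \<le> h k + log 2 (f k)"
  shows "measure_pmf.expectation K g \<le> measure_pmf.expectation K h"
proof -
  have fin: "(\<integral>\<^sup>+k. ennreal (f k) \<partial>K) < \<infinity>"
    using le1 by (simp add: le_less_trans)
  have intf: "integrable K f"
    by (rule integrableI_nonneg) (use fin pos in \<open>auto simp: AE_measure_pmf_iff less_imp_le\<close>)
  have Ef: "measure_pmf.expectation K f \<le> 1"
  proof -
    have "measure_pmf.expectation K f = enn2real (\<integral>\<^sup>+k. ennreal (f k) \<partial>K)"
      by (rule integral_eq_nn_integral) (use pos in \<open>auto simp: AE_measure_pmf_iff less_imp_le\<close>)
    also have "\<dots> \<le> enn2real 1" by (rule enn2real_mono[OF le1]) simp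
    finally show ?thesis by simp
  qed
  have pw2: "g k \<le> h k + (f k - 1) / ln 2" if "k \<in> set_pmf K" for k
  proof -
    have "ln (f k) \<le> f k - 1" using pos[OF that] by (rule ln_le_minus_one)
    hence "log 2 (f k) \<le> (f k - 1) / ln 2" by (simp add: log_def divide_right_mono)
    thus ?thesis using pw[OF that] by simp
  qed
  have "measure_pmf.expectation K g \<le> measure_pmf.expectation K (\<lambda>k. h k + (f k - 1) / ln 2)"
    by (rule integral_mono_AE) (use intg inth intf pw2 in \<open>auto simp: AE_measure_pmf_iff\<close>)
  also have "\<dots> = measure_pmf.expectation K h + (measure_pmf.expectation K f - 1) / ln 2"
    using intf inth by (simp add: Bochner_Integration.integral_diff Bochner_Integration.integral_add)
  also have "\<dots> \<le> measure_pmf.expectation K h" using Ef by (simp add: divide_nonpos_pos)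
  finally show ?thesis .
qed

lemma pd_mono:
  assumes "\<And>k'. V k' = V k \<Longrightarrow> U k' = U k"
  shows "pd K V (V k) \<le> pd K U (U k)"
  unfolding pd_measure by (rule measure_pmf.finite_measure_mono) (use assms in blast, simp)

lemma pd_cong:
  assumes "\<And>k'. V k' = v \<longleftrightarrow> U k' = u"
  shows "pd K V v = pd K U u"
proof -
  have "{k. V k = v} = {k. U k = u}" using assms by blast
  thus ?thesis unfolding pd_measure by simp
qed

definition mk :: "'k pmf \<Rightarrow> ('k \<Rightarrow> 'a) \<Rightarrow> ('k \<Rightarrow> 'b) \<Rightarrow> ('k \<Rightarrow> 'c) \<Rightarrow> bool" where
  "mk K A B C \<longleftrightarrow> (\<forall>k\<in>set_pmf K. pd K (\<lambda>k. (A k, B k, C k)) (A k, B k, C k) * pd K B (B k)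
      \<le> pd K (\<lambda>k. (A k, B k)) (A k, B k) * pd K (\<lambda>k. (B k, C k)) (B k, C k))"

lemma ratio_ineq:
  fixes pB pAC pAB pC pT pBC :: real
  assumes "0<pB" "0<pAC" "0<pAB" "0<pC" "0<pT" "0<pBC" "pT*pB \<le> pAB*pBC"
  shows "pB*pAC/(pAB*pC) \<le> pAC*pBC/pC/pT"
proof -
  have "pB*pAC/(pAB*pC) = (pT*pB) * pAC / (pAB*pC*pT)" using assms by (simp add: field_simps)
  also have "\<dots> \<le> (pAB*pBC) * pAC / (pAB*pC*pT)" using assms
    by (intro divide_right_mono mult_right_mono) auto
  also have "\<dots> = pAC*pBC/pC/pT" using assms by (simp add: field_simps)
  finally show ?thesis .
qed

lemma log_id1:
  fixes x y a b c :: real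
  assumes "0<x" "0<y" "0<a" "0<b" "0<c"
  shows "log 2 (x/(a*c)) = log 2 (y/(a*b)) + log 2 (b*x/(y*c))"
  using assms by (simp add: log_divide log_mult)

lemma DP1:
  assumes fin: "finite (A ` set_pmf K)" and mkv: "mk K A B C"
  shows "MIK K A C \<le> MIK K A B"
proof -
  define f where "f k = pd K B (B k) * pd K (\<lambda>k. (A k, C k)) (A k, C k)
      / (pd K (\<lambda>k. (A k, B k)) (A k, B k) * pd K C (C k))" for k
  have fpos: "f k > 0" if "k \<in> set_pmf K" for k
    using that unfolding f_def by (intro divide_pos_pos mult_pos_pos pd_pos'; simp)
  have le1: "(\<integral>\<^sup>+k. ennreal (f k) \<partial>K) \<le> 1"
  proof (rule ratio_le1[where L="cp K C A B" and T="\<lambda>k. (A k, B k, C k)"])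
    fix k assume k: "k \<in> set_pmf K"
    have M: "pd K (\<lambda>k. (A k, B k, C k)) (A k, B k, C k) * pd K B (B k)
      \<le> pd K (\<lambda>k. (A k, B k)) (A k, B k) * pd K (\<lambda>k. (B k, C k)) (B k, C k)"
      using mkv k by (simp add: mk_def)
    have bc: "pd K (\<lambda>k. (B k, C k)) (B k, C k) = pd K (\<lambda>k. (C k, B k)) (C k, B k)"
      by (rule pd_cong) auto
    have "f k \<le> pd K (\<lambda>k. (A k, C k)) (A k, C k) * pd K (\<lambda>k. (B k, C k)) (B k, C k) / pd K C (C k)
               / pd K (\<lambda>k. (A k, B k, C k)) (A k, B k, C k)"
      unfolding f_def apply (rule ratio_ineq)
      apply (rule pd_pos'[OF k], simp)+
      by (rule M)
    thus "f k \<le> pmf (cp K C A B) (A k, B k, C k) / pmf (map_pmf (\<lambda>k. (A k, B k, C k)) K) (A k, B k, C k)"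
      unfolding pmf_cp pd_def[symmetric] bc by simp
  qed
  show ?thesis
    unfolding MIK_repr(2)[OF fin]
  proof (rule gibbs_gen[OF fpos le1 MIK_repr(1)[OF fin] MIK_repr(1)[OF fin]])
    fix k assume k: "k \<in> set_pmf K"
    have "MIFK K A C k = MIFK K A B k + log 2 (f k)"
      unfolding MIFK_def f_def using k
      by (intro log_id1 pd_pos'; simp)
    thus "MIFK K A C k \<le> MIFK K A B k + log 2 (f k)" by simp
  qed
qed

lemma log_id2:
  fixes x y a b c :: real
  assumes "0<x" "0<y" "0<a" "0<b" "0<c"
  shows "log 2 (x/(a*c)) = log 2 (y/(b*c)) + log 2 (b*x/(a*y))"
  using assms by (simp add: log_divide log_mult)

lemma DP2:
  assumes finA: "finite (A ` set_pmf K)" and finB: "finite (B ` set_pmf K)" and mkv: "mk K A B C"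
  shows "MIK K A C \<le> MIK K B C"
proof -
  define f where "f k = pd K B (B k) * pd K (\<lambda>k. (A k, C k)) (A k, C k)
      / (pd K A (A k) * pd K (\<lambda>k. (B k, C k)) (B k, C k))" for k
  have fpos: "f k > 0" if "k \<in> set_pmf K" for k
    using that unfolding f_def by (intro divide_pos_pos mult_pos_pos pd_pos'; simp)
  have le1: "(\<integral>\<^sup>+k. ennreal (f k) \<partial>K) \<le> 1"
  proof (rule ratio_le1[where L="cp K A B C" and T="\<lambda>k. (B k, C k, A k)"])
    fix k assume k: "k \<in> set_pmf K"
    have M: "pd K (\<lambda>k. (A k, B k, C k)) (A k, B k, C k) * pd K B (B k)
      \<le> pd K (\<lambda>k. (A k, B k)) (A k, B k) * pd K (\<lambda>k. (B k, C k)) (B k, C k)"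
      using mkv k by (simp add: mk_def)
    have e1: "pd K (\<lambda>k. (B k, A k)) (B k, A k) = pd K (\<lambda>k. (A k, B k)) (A k, B k)"
      by (rule pd_cong) auto
    have e2: "pd K (\<lambda>k. (C k, A k)) (C k, A k) = pd K (\<lambda>k. (A k, C k)) (A k, C k)"
      by (rule pd_cong) auto
    have e3: "pd K (\<lambda>k. (B k, C k, A k)) (B k, C k, A k) = pd K (\<lambda>k. (A k, B k, C k)) (A k, B k, C k)"
      by (rule pd_cong) auto
    have "f k \<le> pd K (\<lambda>k. (A k, C k)) (A k, C k) * pd K (\<lambda>k. (A k, B k)) (A k, B k) / pd K A (A k)
               / pd K (\<lambda>k. (A k, B k, C k)) (A k, B k, C k)"
      unfolding f_def mult.commute[of "pd K A (A k)"] apply (rule ratio_ineq)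
      apply (rule pd_pos'[OF k], simp)+
      using M by (simp add: mult.commute)
    thus "f k \<le> pmf (cp K A B C) (B k, C k, A k) / pmf (map_pmf (\<lambda>k. (B k, C k, A k)) K) (B k, C k, A k)"
      unfolding pmf_cp pd_def[symmetric] e1 e2 e3 by (simp add: mult.commute)
  qed
  show ?thesis
    unfolding MIK_repr(2)[OF finA] MIK_repr(2)[OF finB]
  proof (rule gibbs_gen[OF fpos le1 MIK_repr(1)[OF finA] MIK_repr(1)[OF finB]])
    fix k assume k: "k \<in> set_pmf K"
    have "MIFK K A C k = MIFK K B C k + log 2 (f k)"
      unfolding MIFK_def f_def using k
      by (intro log_id2 pd_pos'; simp)
    thus "MIFK K A C k \<le> MIFK K B C k + log 2 (f k)" by simp
  qed
qed

lemma entropy_integrable: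
  assumes H: "entropy_pmf (map_pmf W K) \<le> ereal c"
  shows "integrable K (\<lambda>k. - log 2 (pd K W (W k)))"
    "measure_pmf.expectation K (\<lambda>k. - log 2 (pd K W (W k))) \<le> c"
proof -
  define Q where "Q = map_pmf W K"
  define N where "N = (\<integral>\<^sup>+ w. ennreal (- pmf Q w * log 2 (pmf Q w)) \<partial>count_space UNIV)"
  have HN: "enn2ereal N \<le> ereal c" using H by (simp add: entropy_pmf_def N_def Q_def)
  have Ntop: "N \<noteq> \<top>" using HN by auto
  have Nc: "enn2real N \<le> c"
    using HN by (metis PInfty_neq_ereal(1) enn2ereal_nonneg real_of_ereal.simps(1)
    real_of_ereal_enn2ereal real_of_ereal_positive_mono)
  have nn: "0 \<le> - log 2 (pmf Q w)" for w
  proof (cases "pmf Q w = 0")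
    case False thus ?thesis by (simp add: pmf_le_1 order.not_eq_order_implies_strict)
  qed (simp add: log_def)
  have eqN: "(\<integral>\<^sup>+k. ennreal (- log 2 (pd K W (W k))) \<partial>K) = N"
  proof -
    have "(\<integral>\<^sup>+k. ennreal (- log 2 (pd K W (W k))) \<partial>K) = (\<integral>\<^sup>+w. ennreal (- log 2 (pmf Q w)) \<partial>Q)"
      by (simp add: Q_def pd_def)
    also have "\<dots> = (\<integral>\<^sup>+w. ennreal (pmf Q w) * ennreal (- log 2 (pmf Q w)) \<partial>count_space UNIV)"
      by (rule nn_integral_measure_pmf)
    also have "\<dots> = N" unfolding N_def
    proof (intro nn_integral_cong)
      fix x
      have "ennreal (pmf Q x) * ennreal (- log 2 (pmf Q x)) = ennreal (pmf Q x * - log 2 (pmf Q x))"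
        by (rule ennreal_mult[symmetric]) (use nn[of x] in simp_all)
      thus "ennreal (pmf Q x) * ennreal (- log 2 (pmf Q x)) = ennreal (- pmf Q x * log 2 (pmf Q x))"
        by simp
    qed
    finally show ?thesis .
  qed
  have nnK: "AE k in K. 0 \<le> - log 2 (pd K W (W k))"
    using nn by (simp add: pd_def Q_def)
  show int: "integrable K (\<lambda>k. - log 2 (pd K W (W k)))"
    by (rule integrableI_nonneg) (use nnK eqN Ntop in \<open>auto simp: top.not_eq_extremum\<close>)
  have "measure_pmf.expectation K (\<lambda>k. - log 2 (pd K W (W k))) = enn2real N"
    using integral_eq_nn_integral[OF _ nnK] eqN by simp
  thus "measure_pmf.expectation K (\<lambda>k. - log 2 (pd K W (W k))) \<le> c" using Nc by simp
qed

lemma log_id3: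
  fixes x a b e d :: real
  assumes "0<x" "0<a" "0<b" "0<e" "0<d"
  shows "log 2 (x/(a*d)) = log 2 (x/(a*b)) + - log 2 e + log 2 (b*e/d)"
  using assms by (simp add: log_divide log_mult)

lemma MI_aux:
  assumes fin: "finite (A ` set_pmf K)" and H: "entropy_pmf (map_pmf W K) \<le> ereal c"
  shows "MIK K A (\<lambda>k. (B k, W k)) \<le> MIK K A B + c"
proof -
  define f where "f k = pd K B (B k) * pd K W (W k) / pd K (\<lambda>k. (B k, W k)) (B k, W k)" for k
  have fpos: "f k > 0" if "k \<in> set_pmf K" for k
    using that unfolding f_def by (intro divide_pos_pos mult_pos_pos pd_pos'; simp)
  have le1: "(\<integral>\<^sup>+k. ennreal (f k) \<partial>K) \<le> 1"
  proof (rule ratio_le1[where L="pair_pmf (map_pmf B K) (map_pmf W K)" and T="\<lambda>k. (B k, W k)"])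
    fix k assume k: "k \<in> set_pmf K"
    show "f k \<le> pmf (pair_pmf (map_pmf B K) (map_pmf W K)) (B k, W k) / pmf (map_pmf (\<lambda>k. (B k, W k)) K) (B k, W k)"
      by (simp add: f_def pmf_pair pd_def)
  qed
  have intH: "integrable K (\<lambda>k. MIFK K A B k + - log 2 (pd K W (W k)))"
    using Bochner_Integration.integrable_add[OF MIK_repr(1)[OF fin, of B] entropy_integrable(1)[OF H]] by simp
  have "MIK K A (\<lambda>k. (B k, W k)) \<le> measure_pmf.expectation K (\<lambda>k. MIFK K A B k + - log 2 (pd K W (W k)))"
    unfolding MIK_repr(2)[OF fin]
  proof (rule gibbs_gen[OF fpos le1 MIK_repr(1)[OF fin] intH])
    fix k assume k: "k \<in> set_pmf K"
    have le: "pd K (\<lambda>k. (A k, B k, W k)) (A k, B k, W k) \<le> pd K (\<lambda>k. (A k, B k)) (A k, B k)"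
      by (rule pd_mono) auto
    have "MIFK K A (\<lambda>k. (B k, W k)) k \<le> log 2 (pd K (\<lambda>k. (A k, B k)) (A k, B k) / (pd K A (A k) * pd K (\<lambda>k. (B k, W k)) (B k, W k)))"
      unfolding MIFK_def
    proof (rule log_mono)
      have p1: "0 < pd K A (A k) * pd K (\<lambda>k. (B k, W k)) (B k, W k)"
        by (intro mult_pos_pos pd_pos'[OF k]; simp)
      show "0 < pd K (\<lambda>k. (A k, B k, W k)) (A k, B k, W k) / (pd K A (A k) * pd K (\<lambda>k. (B k, W k)) (B k, W k))"
        by (intro divide_pos_pos p1 pd_pos'[OF k]; simp)
      show "pd K (\<lambda>k. (A k, B k, W k)) (A k, B k, W k) / (pd K A (A k) * pd K (\<lambda>k. (B k, W k)) (B k, W k))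
          \<le> pd K (\<lambda>k. (A k, B k)) (A k, B k) / (pd K A (A k) * pd K (\<lambda>k. (B k, W k)) (B k, W k))"
        using le p1 by (rule divide_right_mono[OF _ less_imp_le])
    qed simp
    also have "\<dots> = MIFK K A B k + - log 2 (pd K W (W k)) + log 2 (f k)"
      unfolding MIFK_def f_def using k
      by (intro log_id3 pd_pos'; simp)
    finally show "MIFK K A (\<lambda>k. (B k, W k)) k \<le> MIFK K A B k + - log 2 (pd K W (W k)) + log 2 (f k)" .
  qed
  also have "\<dots> = MIK K A B + measure_pmf.expectation K (\<lambda>k. - log 2 (pd K W (W k)))"
    unfolding MIK_repr(2)[OF fin, of B]
    by (rule Bochner_Integration.integral_add[OF MIK_repr(1)[OF fin, of B] entropy_integrable(1)[OF H]])
  also have "\<dots> \<le> MIK K A B + c" using entropy_integrable(2)[OF H] by simp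
  finally show ?thesis .
qed

lemma MI_return: "mutual_info_pmf (return_pmf z) = 0"
proof -
  have "(\<lambda>(x, y). pmf (return_pmf z) (x, y) *
      log 2 (pmf (return_pmf z) (x, y) / (pmf (map_pmf fst (return_pmf z)) x * pmf (map_pmf snd (return_pmf z)) y)))
      = (\<lambda>_. 0)"
    by (auto simp: fun_eq_iff indicator_def)
  thus ?thesis unfolding mutual_info_pmf_def by simp
qed

lemma MI_prod:
  fixes J1 :: "('x1 \<times> 'y1) pmf" and J2 :: "('x2 \<times> 'y2) pmf"
    and f :: "'x1 \<Rightarrow> 'x2 \<Rightarrow> 'x" and g :: "'y1 \<Rightarrow> 'y2 \<Rightarrow> 'y"
  assumes fin1: "finite (set_pmf (map_pmf fst J1))" and fin2: "finite (set_pmf (map_pmf fst J2))"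
    and injf: "inj_on (\<lambda>(a, b). f a b) (set_pmf (map_pmf fst J1) \<times> set_pmf (map_pmf fst J2))"
    and injg: "inj (\<lambda>(a, b). g a b)"
  shows "mutual_info_pmf (map_pmf (\<lambda>((x1, y1), (x2, y2)). (f x1 x2, g y1 y2)) (pair_pmf J1 J2))
         = mutual_info_pmf J1 + mutual_info_pmf J2"
proof -
  define Q where "Q = pair_pmf J1 J2"
  define H where "H = (\<lambda>((x1::'x1, y1::'y1), (x2::'x2, y2::'y2)). (f x1 x2, g y1 y2))"
  define J where "J = map_pmf H Q"
  have mfst: "map_pmf fst J = map_pmf (\<lambda>(a, b). f a b) (pair_pmf (map_pmf fst J1) (map_pmf fst J2))"
    unfolding J_def Q_def H_def map_pair[symmetric] by (simp add: map_pmf_comp case_prod_beta)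
  have msnd: "map_pmf snd J = map_pmf (\<lambda>(a, b). g a b) (pair_pmf (map_pmf snd J1) (map_pmf snd J2))"
    unfolding J_def Q_def H_def map_pair[symmetric] by (simp add: map_pmf_comp case_prod_beta)
  have finJ: "finite (set_pmf (map_pmf fst J))" unfolding mfst using fin1 fin2 by simp
  have injH: "inj_on H (set_pmf Q)"
  proof (rule inj_onI)
    fix q q' assume q: "q \<in> set_pmf Q" and q': "q' \<in> set_pmf Q" and e: "H q = H q'"
    obtain x1 y1 x2 y2 where qd: "q = ((x1, y1), (x2, y2))" by (metis prod.collapse)
    obtain x1' y1' x2' y2' where qd': "q' = ((x1', y1'), (x2', y2'))" by (metis prod.collapse)
    have m: "(x1, x2) \<in> set_pmf (map_pmf fst J1) \<times> set_pmf (map_pmf fst J2)"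
            "(x1', x2') \<in> set_pmf (map_pmf fst J1) \<times> set_pmf (map_pmf fst J2)"
      using q q' by (force simp: Q_def qd qd')+
    have "f x1 x2 = f x1' x2'" "g y1 y2 = g y1' y2'" using e by (simp_all add: H_def qd qd')
    hence "(x1, x2) = (x1', x2')" "(y1, y2) = (y1', y2')"
      using inj_onD[OF injf _ m] injD[OF injg] by auto
    thus "q = q'" by (simp add: qd qd')
  qed
  have pw: "MIF J (H q) = MIF J1 (fst q) + MIF J2 (snd q)" if q: "q \<in> set_pmf Q" for q
  proof -
    obtain x1 y1 x2 y2 where qd: "q = ((x1, y1), (x2, y2))" by (metis prod.collapse)
    have s1: "(x1, y1) \<in> set_pmf J1" and s2: "(x2, y2) \<in> set_pmf J2" using q by (auto simp: Q_def qd)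
    have "pmf J (H q) = pmf J1 (x1, y1) * pmf J2 (x2, y2)"
      unfolding J_def pmf_map_inj[OF injH q] by (simp add: Q_def qd pmf_pair)
    moreover have "pmf (map_pmf fst J) (f x1 x2) = pmf (map_pmf fst J1) x1 * pmf (map_pmf fst J2) x2"
    proof -
      have "x1 \<in> set_pmf (map_pmf fst J1)" "x2 \<in> set_pmf (map_pmf fst J2)" using s1 s2 by force+
      moreover have injf': "inj_on (\<lambda>(a, b). f a b) (set_pmf (pair_pmf (map_pmf fst J1) (map_pmf fst J2)))"
        using injf by simp
      ultimately show ?thesis unfolding mfst using pmf_map_inj[OF injf', of "(x1, x2)"] by (simp add: pmf_pair)
    qed
    moreover have "pmf (map_pmf snd J) (g y1 y2) = pmf (map_pmf snd J1) y1 * pmf (map_pmf snd J2) y2"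
      unfolding msnd using pmf_map_inj'[OF injg, of _ "(y1, y2)"] by (simp add: pmf_pair)
    moreover have "pmf J1 (x1, y1) > 0" "pmf J2 (x2, y2) > 0" using s1 s2 by (simp_all add: pmf_positive)
    moreover have "pmf (map_pmf fst J1) x1 > 0" "pmf (map_pmf fst J2) x2 > 0"
      "pmf (map_pmf snd J1) y1 > 0" "pmf (map_pmf snd J2) y2 > 0"
      using s1 s2 by (force intro: pmf_positive)+
    ultimately show ?thesis
      by (simp add: MIF_def H_def qd log_divide log_mult)
  qed
  have i1: "integrable Q (\<lambda>q. MIF J1 (fst q))"
    using MI_repr(1)[OF fin1] unfolding Q_def
    by (subst integrable_map_pmf_eq[symmetric, where f=fst]) (simp add: map_fst_pair_pmf)
  have i2: "integrable Q (\<lambda>q. MIF J2 (snd q))"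
    using MI_repr(1)[OF fin2] unfolding Q_def
    by (subst integrable_map_pmf_eq[symmetric, where f=snd]) (simp add: map_snd_pair_pmf)
  have "mutual_info_pmf J = measure_pmf.expectation Q (\<lambda>q. MIF J (H q))"
    using MI_repr(2)[OF finJ] by (simp add: J_def)
  also have "\<dots> = measure_pmf.expectation Q (\<lambda>q. MIF J1 (fst q) + MIF J2 (snd q))"
    by (rule integral_cong_AE) (auto simp: AE_measure_pmf_iff pw)
  also have "\<dots> = measure_pmf.expectation Q (\<lambda>q. MIF J1 (fst q)) + measure_pmf.expectation Q (\<lambda>q. MIF J2 (snd q))"
    by (rule Bochner_Integration.integral_add[OF i1 i2])
  also have "\<dots> = mutual_info_pmf J1 + mutual_info_pmf J2"
  proof -
    have "measure_pmf.expectation Q (\<lambda>q. MIF J1 (fst q)) = measure_pmf.expectation (map_pmf fst Q) (MIF J1)"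
      by simp
    moreover have "measure_pmf.expectation Q (\<lambda>q. MIF J2 (snd q)) = measure_pmf.expectation (map_pmf snd Q) (MIF J2)"
      by simp
    ultimately show ?thesis
      using MI_repr(2)[OF fin1] MI_repr(2)[OF fin2] by (simp add: Q_def map_fst_pair_pmf map_snd_pair_pmf)
  qed
  finally show ?thesis by (simp add: J_def H_def Q_def)
qed

lemma finite_P:
  fixes P :: "nat \<Rightarrow> 'a::finite list pmf"
  assumes "process P"
  shows "finite (set_pmf (P n))"
proof (rule finite_subset)
  show "set_pmf (P n) \<subseteq> {xs. set xs \<subseteq> UNIV \<and> length xs = n}"
    using assms by (auto simp: process_def)
  show "finite {xs :: 'a list. set xs \<subseteq> UNIV \<and> length xs = n}"
    by (rule finite_lists_length_eq) simp
qed

lemma map_fst_chan_joint: "map_pmf fst (chan_joint p Z) = p"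
  by (simp add: chan_joint_def map_bind_pmf map_pmf_comp o_def bind_return_pmf')

lemma P0: assumes "process P" shows "P 0 = return_pmf []"
proof -
  have "set_pmf (P 0) \<subseteq> {[]}" using assms by (auto simp: process_def)
  thus ?thesis by (simp add: set_pmf_subset_singleton)
qed

lemma blocks_Suc: "blocks b (Suc t) x = take b x # blocks b t (drop b x)"
proof -
  have "[0..<Suc t] = 0 # map Suc [0..<t]" by (simp add: upt_conv_Cons map_Suc_upt)
  thus ?thesis by (simp add: blocks_def drop_drop add.commute)
qed

lemma P_split:
  assumes pr: "process P" and bi: "block_independent P b"
  shows "P (Suc t * b) = map_pmf (\<lambda>(x1, x2). x1 @ x2) (pair_pmf (P b) (P (t * b)))"
proof (rule pmf_eqI)
  fix x
  define Q where "Q = pair_pmf (P b) (P (t * b))"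
  define app where "app = (\<lambda>(x1::'a list, x2::'a list). x1 @ x2)"
  have len: "\<And>n y. y \<in> set_pmf (P n) \<Longrightarrow> length y = n" using pr by (auto simp: process_def)
  have "pmf (map_pmf app Q) x = measure_pmf.prob Q (app -` {x} \<inter> set_pmf Q)"
    by (simp add: pmf_map measure_Int_set_pmf)
  also have "\<dots> = pmf (P (Suc t * b)) x"
  proof (cases "length x = Suc t * b")
    case True
    have "app -` {x} \<inter> set_pmf Q = {(take b x, drop b x)} \<inter> set_pmf Q"
      by (auto simp: app_def Q_def dest: len)
    hence "measure_pmf.prob Q (app -` {x} \<inter> set_pmf Q) = measure_pmf.prob Q {(take b x, drop b x)}"
      by (simp only: measure_Int_set_pmf)
    also have "\<dots> = pmf (P b) (take b x) * pmf (P (t * b)) (drop b x)"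
      by (simp only: measure_pmf_single Q_def pmf_pair)
    also have "\<dots> = pmf (P (Suc t * b)) x"
    proof (cases t)
      case 0
      then show ?thesis using True by (simp add: P0[OF pr])
    next
      case (Suc t')
      have "pmf (P (Suc t * b)) x = prod_list (map (pmf (P b)) (blocks b (Suc t) x))"
        using bi True unfolding block_independent_def by (metis Suc_le_mono le0 One_nat_def)
      moreover have "pmf (P (t * b)) (drop b x) = prod_list (map (pmf (P b)) (blocks b t (drop b x)))"
      proof -
        have "length (drop b x) = t * b" "t \<ge> 1" using True Suc by auto
        thus ?thesis using bi unfolding block_independent_def by blast
      qed
      ultimately show ?thesis by (simp add: blocks_Suc)
    qed
    finally show ?thesis .
  next
    case False
    have "app -` {x} \<inter> set_pmf Q = {}"
      using False by (auto simp: app_def Q_def dest!: len)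
    moreover have "pmf (P (Suc t * b)) x = 0"
      using False len by (metis set_pmf_iff)
    ultimately show ?thesis by simp
  qed
  finally show "pmf (P (Suc t * b)) x = pmf (map_pmf (\<lambda>(x1, x2). x1 @ x2) (pair_pmf (P b) (P (t * b)))) x"
    by (simp add: Q_def app_def)
qed

lemma pieces_split:
  assumes pr: "process P" and bi: "block_independent P b"
  shows "pieces_joint (P (Suc t * b)) Zs (blocks b (Suc t)) =
    map_pmf (\<lambda>((x1, y1), (x2, y2)). (x1 @ x2, y1 # y2))
      (pair_pmf (chan_joint (P b) Zs) (pieces_joint (P (t * b)) Zs (blocks b t)))"
proof -
  have len: "\<And>n y. y \<in> set_pmf (P n) \<Longrightarrow> length y = n" using pr by (auto simp: process_def)
  have "pieces_joint (P (Suc t * b)) Zs (blocks b (Suc t)) =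
      bind_pmf (P b) (\<lambda>x1. bind_pmf (P (t * b)) (\<lambda>x2.
        map_pmf (Pair (x1 @ x2)) (indep_apply Zs (blocks b (Suc t) (x1 @ x2)))))"
    unfolding pieces_joint_def chan_joint_def P_split[OF pr bi, of t]
    by (simp add: pair_pmf_def bind_map_pmf bind_assoc_pmf bind_return_pmf)
  also have "\<dots> = bind_pmf (P b) (\<lambda>x1. bind_pmf (P (t * b)) (\<lambda>x2. bind_pmf (Zs x1) (\<lambda>z.
        map_pmf (\<lambda>zs. (x1 @ x2, z # zs)) (indep_apply Zs (blocks b t x2)))))"
  proof (intro bind_pmf_cong refl)
    fix x1 x2 assume "x1 \<in> set_pmf (P b)"
    hence "length x1 = b" by (rule len)
    hence "blocks b (Suc t) (x1 @ x2) = x1 # blocks b t x2" by (simp add: blocks_Suc)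
    thus "map_pmf (Pair (x1 @ x2)) (indep_apply Zs (blocks b (Suc t) (x1 @ x2))) =
      bind_pmf (Zs x1) (\<lambda>z. map_pmf (\<lambda>zs. (x1 @ x2, z # zs)) (indep_apply Zs (blocks b t x2)))"
      by (simp add: map_bind_pmf map_pmf_comp o_def)
  qed
  also have "\<dots> = bind_pmf (P b) (\<lambda>x1. bind_pmf (Zs x1) (\<lambda>z. bind_pmf (P (t * b)) (\<lambda>x2.
        map_pmf (\<lambda>zs. (x1 @ x2, z # zs)) (indep_apply Zs (blocks b t x2)))))"
    by (subst bind_commute_pmf) (rule refl)
  also have "\<dots> = map_pmf (\<lambda>((x1, y1), (x2, y2)). (x1 @ x2, y1 # y2))
      (pair_pmf (chan_joint (P b) Zs) (pieces_joint (P (t * b)) Zs (blocks b t)))"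
    unfolding pieces_joint_def chan_joint_def
    by (simp add: pair_pmf_def map_bind_pmf bind_map_pmf bind_assoc_pmf bind_return_pmf map_pmf_def)
  finally show ?thesis .
qed

lemma MI_blocks:
  fixes P :: "nat \<Rightarrow> 'a::finite list pmf"
  assumes pr: "process P" and bi: "block_independent P b"
  shows "mutual_info_pmf (pieces_joint (P (t * b)) Zs (blocks b t)) = real t * chan_MI (P b) Zs"
proof (induction t)
  case 0
  have "pieces_joint (P (0 * b)) Zs (blocks b 0) = return_pmf ([], [])"
    by (simp add: P0[OF pr] pieces_joint_def chan_joint_def blocks_def bind_return_pmf)
  thus ?case by (simp add: MI_return)
next
  case (Suc t)
  have len: "\<And>n y. y \<in> set_pmf (P n) \<Longrightarrow> length y = n" using pr by (auto simp: process_def)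
  have fin1: "finite (set_pmf (map_pmf fst (chan_joint (P b) Zs)))"
    by (simp add: map_fst_chan_joint finite_P[OF pr])
  have fin2: "finite (set_pmf (map_pmf fst (pieces_joint (P (t * b)) Zs (blocks b t))))"
    by (simp add: pieces_joint_def map_fst_chan_joint finite_P[OF pr])
  have injf: "inj_on (\<lambda>(x1, x2). x1 @ x2) (set_pmf (map_pmf fst (chan_joint (P b) Zs)) \<times>
      set_pmf (map_pmf fst (pieces_joint (P (t * b)) Zs (blocks b t))))"
  proof (rule inj_onI)
    fix u v assume a: "u \<in> set_pmf (map_pmf fst (chan_joint (P b) Zs)) \<times>
      set_pmf (map_pmf fst (pieces_joint (P (t * b)) Zs (blocks b t)))"
      and c: "v \<in> set_pmf (map_pmf fst (chan_joint (P b) Zs)) \<times>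
      set_pmf (map_pmf fst (pieces_joint (P (t * b)) Zs (blocks b t)))"
      and e: "(\<lambda>(x1, x2). x1 @ x2) u = (\<lambda>(x1, x2). x1 @ x2) v"
    obtain a1 a2 where u: "u = (a1, a2)" by force
    obtain b1 b2 where v: "v = (b1, b2)" by force
    have "a1 \<in> set_pmf (P b)" "b1 \<in> set_pmf (P b)"
      using a c u v by (simp_all add: map_fst_chan_joint mem_Times_iff)
    hence "length a1 = b" "length b1 = b" using len by blast+
    thus "u = v" using e u v by (simp add: append_eq_append_conv)
  qed
  have injg: "inj (\<lambda>(y1, y2). y1 # y2)" by (auto simp: inj_def)
  have "mutual_info_pmf (pieces_joint (P (Suc t * b)) Zs (blocks b (Suc t))) =
      mutual_info_pmf (chan_joint (P b) Zs) + mutual_info_pmf (pieces_joint (P (t * b)) Zs (blocks b t))"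
    unfolding pieces_split[OF pr bi] by (rule MI_prod[OF fin1 fin2 injf injg])
  thus ?case using Suc.IH by (simp add: chan_MI_def algebra_simps)
qed

lemma markov_mk:
  assumes "markov_chain (map_pmf (\<lambda>k. (A k, B k, C k)) K)"
  shows "mk K A B C"
  unfolding mk_def
proof
  fix k assume "k \<in> set_pmf K"
  from assms have "pmf (map_pmf (\<lambda>k. (A k, B k, C k)) K) (A k, B k, C k) * pmf (map_pmf B K) (B k) =
     pmf (map_pmf (\<lambda>k. (A k, B k)) K) (A k, B k) * pmf (map_pmf (\<lambda>k. (B k, C k)) K) (B k, C k)"
    unfolding markov_chain_def by (simp add: map_pmf_comp o_def)
  thus "pd K (\<lambda>k. (A k, B k, C k)) (A k, B k, C k) * pd K B (B k)
      \<le> pd K (\<lambda>k. (A k, B k)) (A k, B k) * pd K (\<lambda>k. (B k, C k)) (B k, C k)"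
    by (simp add: pd_def)
qed

lemma mk_fun: "mk K A B (\<lambda>k. g (B k))"
  unfolding mk_def
proof
  fix k
  have "pd K (\<lambda>k. (A k, B k, g (B k))) (A k, B k, g (B k)) = pd K (\<lambda>k. (A k, B k)) (A k, B k)"
    by (rule pd_cong) auto
  moreover have "pd K (\<lambda>k. (B k, g (B k))) (B k, g (B k)) = pd K B (B k)"
    by (rule pd_cong) auto
  ultimately show "pd K (\<lambda>k. (A k, B k, g (B k))) (A k, B k, g (B k)) * pd K B (B k)
      \<le> pd K (\<lambda>k. (A k, B k)) (A k, B k) * pd K (\<lambda>k. (B k, g (B k))) (B k, g (B k))" by simp
qed

lemma mk_fun_first: "mk K (\<lambda>k. g (B k)) B C"
  unfolding mk_def
proof
  fix k
  have "pd K (\<lambda>k. (g (B k), B k, C k)) (g (B k), B k, C k) = pd K (\<lambda>k. (B k, C k)) (B k, C k)"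
    by (rule pd_cong) auto
  moreover have "pd K (\<lambda>k. (g (B k), B k)) (g (B k), B k) = pd K B (B k)"
    by (rule pd_cong) auto
  ultimately show "pd K (\<lambda>k. (g (B k), B k, C k)) (g (B k), B k, C k) * pd K B (B k)
      \<le> pd K (\<lambda>k. (g (B k), B k)) (g (B k), B k) * pd K (\<lambda>k. (B k, C k)) (B k, C k)" by simp
qed

lemma mk_dup: assumes "mk K A B C" shows "mk K A B (\<lambda>k. (B k, C k))"
  unfolding mk_def
proof
  fix k assume k: "k \<in> set_pmf K"
  have "pd K (\<lambda>k. (A k, B k, B k, C k)) (A k, B k, B k, C k) = pd K (\<lambda>k. (A k, B k, C k)) (A k, B k, C k)"
    by (rule pd_cong) auto
  moreover have "pd K (\<lambda>k. (B k, B k, C k)) (B k, B k, C k) = pd K (\<lambda>k. (B k, C k)) (B k, C k)"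
    by (rule pd_cong) auto
  ultimately show "pd K (\<lambda>k. (A k, B k, B k, C k)) (A k, B k, B k, C k) * pd K B (B k)
      \<le> pd K (\<lambda>k. (A k, B k)) (A k, B k) * pd K (\<lambda>k. (B k, B k, C k)) (B k, B k, C k)"
    using assms k unfolding mk_def by simp
qed

lemma aux_bound:
  fixes p :: "'a pmf" and Zs :: "'a \<Rightarrow> 'b pmf"
  assumes aux: "aux_recovers p Zs f c" and fin: "finite (set_pmf p)"
  shows "mutual_info_pmf (pieces_joint p Zs f) \<le> chan_MI p Zs + c"
proof -
  obtain K :: "('a \<times> 'b \<times> 'b list \<times> nat) pmf" where K1: "map_pmf (\<lambda>(x, z, zs, w). (x, z)) K = chan_joint p Zs"
    and K2: "map_pmf (\<lambda>(x, z, zs, w). (x, zs)) K = pieces_joint p Zs f"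
    and K3: "markov_chain (map_pmf (\<lambda>(x, z, zs, w). (x, (z, w), zs)) K)"
    and K4: "entropy_pmf (map_pmf (\<lambda>(x, z, zs, w). w) K) \<le> ereal c"
    using aux unfolding aux_recovers_def by blast
  define X where "X = (\<lambda>k::'a \<times> 'b \<times> 'b list \<times> nat. fst k)"
  define Z where "Z = (\<lambda>k::'a \<times> 'b \<times> 'b list \<times> nat. fst (snd k))"
  define ZS where "ZS = (\<lambda>k::'a \<times> 'b \<times> 'b list \<times> nat. fst (snd (snd k)))"
  define W where "W = (\<lambda>k::'a \<times> 'b \<times> 'b list \<times> nat. snd (snd (snd k)))"
  have e1: "(\<lambda>(x, z, zs, w). (x, z)) = (\<lambda>k. (X k, Z k))"
    by (simp add: fun_eq_iff split_beta X_def Z_def)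
  have e2: "(\<lambda>(x, z, zs, w). (x, zs)) = (\<lambda>k. (X k, ZS k))"
    by (simp add: fun_eq_iff split_beta X_def ZS_def)
  have e3: "(\<lambda>(x, z, zs, w). (x, (z, w), zs)) = (\<lambda>k. (X k, (Z k, W k), ZS k))"
    by (simp add: fun_eq_iff split_beta X_def Z_def ZS_def W_def)
  have e4: "(\<lambda>(x, z, zs, w). w) = W"
    by (simp add: fun_eq_iff split_beta W_def)
  have "map_pmf X K = p"
  proof -
    have "map_pmf X K = map_pmf fst (map_pmf (\<lambda>k. (X k, Z k)) K)" by (simp add: map_pmf_comp o_def)
    also have "\<dots> = p" using K1 e1 by (simp add: map_fst_chan_joint)
    finally show ?thesis .
  qed
  hence finX: "finite (X ` set_pmf K)" using fin by (metis set_map_pmf)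
  have mkv: "mk K X (\<lambda>k. (Z k, W k)) ZS" using K3 e3 by (intro markov_mk) simp
  have "MIK K X ZS \<le> MIK K X (\<lambda>k. (Z k, W k))" by (rule DP1[OF finX mkv])
  also have "\<dots> \<le> MIK K X Z + c" by (rule MI_aux[OF finX]) (use K4 e4 in simp)
  finally show ?thesis
    using K1 K2 e1 e2 by (simp add: MIK_def chan_MI_def)
qed

lemma adm5_bound:
  fixes K :: "('x \<times> 'z \<times> nat) pmf"
  assumes K1: "map_pmf (\<lambda>(x, zs, y). (x, zs)) K = PJ" and mc: "markov_chain K"
    and K3: "map_pmf (\<lambda>(x, zs, y). (x, \<phi> zs y)) K = CJ"
    and fin: "finite (set_pmf (map_pmf fst PJ))"
  shows "mutual_info_pmf CJ \<le> mutual_info_pmf PJ"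
proof -
  define X where "X = (\<lambda>k::'x \<times> 'z \<times> nat. fst k)"
  define ZS where "ZS = (\<lambda>k::'x \<times> 'z \<times> nat. fst (snd k))"
  define Y where "Y = (\<lambda>k::'x \<times> 'z \<times> nat. snd (snd k))"
  have e1: "(\<lambda>(x, zs, y). (x, zs)) = (\<lambda>k. (X k, ZS k))"
    by (simp add: fun_eq_iff split_beta X_def ZS_def)
  have e3: "(\<lambda>(x, zs, y). (x, \<phi> zs y)) = (\<lambda>k. (X k, \<phi> (ZS k) (Y k)))"
    by (simp add: fun_eq_iff split_beta X_def ZS_def Y_def)
  have e0: "(\<lambda>k. (X k, ZS k, Y k)) = id" by (simp add: fun_eq_iff X_def ZS_def Y_def)
  have finX: "finite (X ` set_pmf K)"
  proof -
    have "map_pmf X K = map_pmf fst PJ" unfolding K1[symmetric] e1 by (simp add: map_pmf_comp o_def)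
    thus ?thesis using fin by (metis set_map_pmf)
  qed
  have mk1: "mk K X (\<lambda>k. (ZS k, Y k)) (\<lambda>k. \<phi> (ZS k) (Y k))"
    using mk_fun[of K X "\<lambda>k. (ZS k, Y k)" "\<lambda>(a, b). \<phi> a b"] by simp
  have mk2: "mk K X ZS (\<lambda>k. (ZS k, Y k))"
    by (rule mk_dup, rule markov_mk) (use mc e0 in simp)
  have "MIK K X (\<lambda>k. \<phi> (ZS k) (Y k)) \<le> MIK K X (\<lambda>k. (ZS k, Y k))" by (rule DP1[OF finX mk1])
  also have "\<dots> \<le> MIK K X ZS" by (rule DP1[OF finX mk2])
  finally show ?thesis using K1 K3 e1 e3 by (simp add: MIK_def)
qed

lemma split_lower:
  fixes P :: "nat \<Rightarrow> 'a::finite list pmf"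
  assumes pr: "process P" and mn: "m \<le> n"
  shows "chan_MI (P m) Zs \<le> mutual_info_pmf (pieces_joint (P n) Zs (\<lambda>x. [take m x, drop m x]))"
proof -
  define J where "J = pieces_joint (P n) Zs (\<lambda>x. [take m x, drop m x])"
  have mfst: "map_pmf fst J = P n" by (simp add: J_def pieces_joint_def map_fst_chan_joint)
  have finX: "finite (fst ` set_pmf J)"
    using finite_P[OF pr, of n] mfst by (metis set_map_pmf)
  have finA: "finite ((\<lambda>k. take m (fst k)) ` set_pmf J)"
  proof -
    have "(\<lambda>k. take m (fst k)) ` set_pmf J = take m ` (fst ` set_pmf J)" by auto
    thus ?thesis using finX by simp
  qed
  have Pm: "map_pmf (take m) (P n) = P m" using pr mn by (simp add: process_def)
  have eqm: "map_pmf (\<lambda>k. (take m (fst k), hd (snd k))) J = chan_joint (P m) Zs"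
  proof -
    have "map_pmf (\<lambda>k. (take m (fst k), hd (snd k))) J =
        bind_pmf (P n) (\<lambda>x. map_pmf (Pair (take m x)) (Zs (take m x)))"
      unfolding J_def pieces_joint_def chan_joint_def
      by (simp add: map_bind_pmf map_pmf_comp o_def bind_return_pmf map_pmf_def[symmetric])
    also have "\<dots> = chan_joint (P m) Zs"
      unfolding chan_joint_def Pm[symmetric] by (simp add: bind_map_pmf)
    finally show ?thesis .
  qed
  have "chan_MI (P m) Zs = MIK J (\<lambda>k. take m (fst k)) (\<lambda>k. hd (snd k))"
    by (simp add: chan_MI_def MIK_def eqm)
  also have "\<dots> \<le> MIK J fst (\<lambda>k. hd (snd k))"
    by (rule DP2[OF finA finX mk_fun_first])
  also have "\<dots> \<le> MIK J fst snd"
    by (rule DP1[OF finX mk_fun])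
  also have "\<dots> = mutual_info_pmf J" by (simp add: MIK_def)
  finally show ?thesis by (simp add: J_def)
qed

theorem lemma3p8:
  fixes Z :: "'a::finite list \<Rightarrow> 'o pmf" and Zs :: "'a list \<Rightarrow> 'p pmf"
    and \<alpha> :: "nat \<Rightarrow> real" and P :: "nat \<Rightarrow> 'a list pmf" and b :: nat
  assumes "admissible Z Zs"
    and "adm4b Zs \<alpha>"
    and "process P"
    and "block_independent P b"
    and "b \<ge> 1"
  shows "\<bar>proc_MI P Zs - chan_MI (P b) Zs / real b\<bar> \<le> \<alpha> b / real b
         \<and> (\<lambda>m. \<alpha> m / real m) \<longlonglongrightarrow> 0"
proof -
  note adm = assms(1) and a4b = assms(2) and pr = assms(3) and bi = assms(4) and b1 = assms(5)
  define I where "I n = chan_MI (P n) Zs" for n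
  have finPt: "finite (set_pmf (map_pmf fst (pieces_joint (P n) Zs f)))" for n and f :: "'a list \<Rightarrow> 'a list list"
    by (simp add: pieces_joint_def map_fst_chan_joint finite_P[OF pr])
  have upper: "I (t * b) \<le> real t * I b" if t1: "t \<ge> 1" for t
  proof -
    from adm obtain \<beta> :: "nat \<Rightarrow> real" where
      h5: "\<forall>P :: nat \<Rightarrow> 'a list pmf. \<forall>b t. process P \<and> b \<ge> 1 \<and> t \<ge> 1 \<longrightarrow>
       (\<exists>(K :: ('a list \<times> 'p list \<times> nat) pmf) (\<phi> :: 'p list \<Rightarrow> nat \<Rightarrow> 'p).
          map_pmf (\<lambda>(x, zs, y). (x, zs)) K = pieces_joint (P (t * b)) Zs (blocks b t) \<and>
          markov_chain K \<and>
          map_pmf (\<lambda>(x, zs, y). (x, \<phi> zs y)) K = chan_joint (P (t * b)) Zs \<and>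
          (\<forall>zs y. (zs, y) \<in> set_pmf (map_pmf snd K) \<longrightarrow>
             (let S = {(zs', y'). (zs', y') \<in> set_pmf (map_pmf snd K) \<and> \<phi> zs' y' = \<phi> zs y}
              in finite S \<and> log 2 (real (card S)) \<le> real t * \<beta> b)))"
      unfolding admissible_def adm5_def by blast
    then obtain K :: "('a list \<times> 'p list \<times> nat) pmf" and \<phi> :: "'p list \<Rightarrow> nat \<Rightarrow> 'p" where
      K1: "map_pmf (\<lambda>(x, zs, y). (x, zs)) K = pieces_joint (P (t * b)) Zs (blocks b t)"
      and K2: "markov_chain K"
      and K3: "map_pmf (\<lambda>(x, zs, y). (x, \<phi> zs y)) K = chan_joint (P (t * b)) Zs"
      using pr b1 t1 by blast
    have "I (t * b) \<le> mutual_info_pmf (pieces_joint (P (t * b)) Zs (blocks b t))"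
      unfolding I_def chan_MI_def by (rule adm5_bound[OF K1 K2 K3 finPt])
    also have "\<dots> = real t * I b" by (simp add: MI_blocks[OF pr bi] I_def)
    finally show ?thesis .
  qed
  have lower: "real t * I b \<le> I (t * b) + real t * \<alpha> b" if t1: "t \<ge> 1" for t
  proof -
    have aux: "aux_recovers (P (t * b)) Zs (blocks b t) (real t * \<alpha> b)"
      using a4b pr b1 t1 unfolding adm4b_def by blast
    have "real t * I b = mutual_info_pmf (pieces_joint (P (t * b)) Zs (blocks b t))"
      by (simp add: MI_blocks[OF pr bi] I_def)
    also have "\<dots> \<le> I (t * b) + real t * \<alpha> b"
      unfolding I_def by (rule aux_bound[OF aux finite_P[OF pr]])
    finally show ?thesis .
  qed
  have alpha_nn: "\<alpha> b \<ge> 0"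
  proof -
    have aux: "aux_recovers (P (1 * b)) Zs (blocks b 1) (real 1 * \<alpha> b)"
      using a4b pr b1 unfolding adm4b_def by blast
    then obtain K :: "('a list \<times> 'p \<times> 'p list \<times> nat) pmf" where
      "entropy_pmf (map_pmf (\<lambda>(x, z, zs, w). w) K) \<le> ereal (real 1 * \<alpha> b)"
      unfolding aux_recovers_def by blast
    moreover have "0 \<le> entropy_pmf (map_pmf (\<lambda>(x, z, zs, w). w) K)"
      by (simp add: entropy_pmf_def)
    ultimately have "(0::ereal) \<le> ereal (real 1 * \<alpha> b)" using order.trans by blast
    thus ?thesis by simp
  qed
  have "\<forall>\<tau>. \<exists>\<gamma> :: nat \<Rightarrow> real. \<tau> \<ge> 1 \<longrightarrow> ((\<lambda>m. \<gamma> m / real m) \<longlonglongrightarrow> 0 \<and>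
      (\<forall>n. n \<ge> \<tau> \<longrightarrow> aux_recovers (P n) Zs (\<lambda>x. [take (n - \<tau>) x, drop (n - \<tau>) x]) (\<gamma> n)))"
  proof
    fix \<tau> :: nat
    show "\<exists>\<gamma> :: nat \<Rightarrow> real. \<tau> \<ge> 1 \<longrightarrow> ((\<lambda>m. \<gamma> m / real m) \<longlonglongrightarrow> 0 \<and>
      (\<forall>n. n \<ge> \<tau> \<longrightarrow> aux_recovers (P n) Zs (\<lambda>x. [take (n - \<tau>) x, drop (n - \<tau>) x]) (\<gamma> n)))"
    proof (cases "\<tau> \<ge> 1")
      case True
      with adm obtain \<gamma> :: "nat \<Rightarrow> real" where g1: "(\<lambda>m. \<gamma> m / real m) \<longlonglongrightarrow> 0"
        and g2: "\<forall>P :: nat \<Rightarrow> 'a list pmf. \<forall>n. process P \<and> n \<ge> \<tau> \<longrightarrow>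
        aux_recovers (P n) Zs (\<lambda>x. [take \<tau> x, drop \<tau> x]) (\<gamma> n) \<and>
        aux_recovers (P n) Zs (\<lambda>x. [take (n - \<tau>) x, drop (n - \<tau>) x]) (\<gamma> n)"
        unfolding admissible_def adm4a_def by blast
      thus ?thesis using pr by blast
    qed auto
  qed
  then obtain G :: "nat \<Rightarrow> nat \<Rightarrow> real" where G: "\<And>\<tau>. \<tau> \<ge> 1 \<Longrightarrow> (\<lambda>m. G \<tau> m / real m) \<longlonglongrightarrow> 0 \<and>
      (\<forall>n. n \<ge> \<tau> \<longrightarrow> aux_recovers (P n) Zs (\<lambda>x. [take (n - \<tau>) x, drop (n - \<tau>) x]) (G \<tau> n))"
    by metis
  have rem: "I (n - \<tau>) \<le> I n + G \<tau> n" if "\<tau> \<ge> 1" "n \<ge> \<tau>" for n \<tau>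
  proof -
    have "I (n - \<tau>) \<le> mutual_info_pmf (pieces_joint (P n) Zs (\<lambda>x. [take (n - \<tau>) x, drop (n - \<tau>) x]))"
      unfolding I_def by (rule split_lower[OF pr]) simp
    also have "\<dots> \<le> I n + G \<tau> n"
      unfolding I_def by (rule aux_bound[OF _ finite_P[OF pr]]) (use G that in blast)
    finally show ?thesis .
  qed
  define D where "D = I b - \<alpha> b"
  define E where "E n = (\<Sum>r\<in>{1..<b}. \<bar>G r n\<bar>)" for n
  have E_nn: "E n \<ge> 0" for n by (simp add: E_def sum_nonneg)
  have main_low: "real (n div b) * D - E n \<le> I n" if nb: "n \<ge> b" for n
  proof -
    define t where "t = n div b"
    define r where "r = n mod b"
    have t1: "t \<ge> 1"
    proof -
      have "b div b \<le> n div b" by (rule div_le_mono[OF nb])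
      thus ?thesis using b1 by (simp add: t_def)
    qed
    have nd: "n = t * b + r" by (simp add: t_def r_def)
    have rb: "r < b" using b1 by (simp add: r_def)
    have tD: "real t * D \<le> I (t * b)" using lower[OF t1] unfolding D_def by (simp add: right_diff_distrib)
    have nr: "n - r = t * b" using nd by simp
    have "real t * D - E n \<le> I n"
    proof (cases "r = 0")
      case True
      hence "I n = I (t * b)" using nr by simp
      thus ?thesis using tD E_nn[of n] by linarith
    next
      case False
      hence r1: "r \<in> {1..<b}" using rb by simp
      have "I (n - r) \<le> I n + G r n" using r1 nd by (intro rem) auto
      hence "I (t * b) \<le> I n + G r n" by (simp only: nr)
      moreover have "G r n \<le> E n"
      proof -
        have "\<bar>G r n\<bar> \<le> (\<Sum>r\<in>{1..<b}. \<bar>G r n\<bar>)"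
          by (rule member_le_sum[OF r1]) auto
        thus ?thesis unfolding E_def by linarith
      qed
      ultimately show ?thesis using tD by linarith
    qed
    thus ?thesis by (simp only: t_def)
  qed
  have low_bound: "D / real b - \<bar>D\<bar> / real n - E n / real n \<le> I n / real n" if nb: "n \<ge> b" for n
  proof -
    define t where "t = n div b"
    have npos: "real n > 0" "real b > 0" using nb b1 by auto
    have tb: "real t * real b \<le> real n" "real n \<le> real t * real b + real b"
    proof -
      have d: "t * b + n mod b = n" unfolding t_def by (rule div_mult_mod_eq)
      have "n mod b < b" using b1 by simp
      hence "t * b \<le> n" "n \<le> t * b + b" using d by linarith+
      thus "real t * real b \<le> real n" "real n \<le> real t * real b + real b" by (simp_all flip: of_nat_mult of_nat_add)
    qed
    have h: "D * (real n - real t * real b) \<le> \<bar>D\<bar> * real b"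
    proof -
      have "D * (real n - real t * real b) \<le> \<bar>D\<bar> * (real n - real t * real b)"
        using tb by (intro mult_right_mono) auto
      also have "\<dots> \<le> \<bar>D\<bar> * real b" using tb by (intro mult_left_mono) auto
      finally show ?thesis .
    qed
    have "D / real b - \<bar>D\<bar> / real n \<le> real t * D / real n"
    proof -
      have e1: "D / real b - \<bar>D\<bar> / real n = (D * real n - \<bar>D\<bar> * real b) / (real b * real n)"
        using npos by (simp add: field_simps)
      have e2: "real t * D / real n = (real t * D * real b) / (real b * real n)"
        using npos by (simp add: field_simps)
      have "D * real n - \<bar>D\<bar> * real b \<le> real t * D * real b" using h by (simp add: algebra_simps)
      hence "(D * real n - \<bar>D\<bar> * real b) / (real b * real n) \<le> (real t * D * real b) / (real b * real n)"
        using npos by (intro divide_right_mono) auto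
      thus ?thesis using e1 e2 by simp
    qed
    moreover have "(real t * D - E n) / real n \<le> I n / real n"
      using main_low[OF nb] npos by (simp add: t_def divide_right_mono)
    ultimately show ?thesis by (simp add: diff_divide_distrib)
  qed
  have E_lim: "(\<lambda>n. E n / real n) \<longlonglongrightarrow> 0"
  proof -
    have "(\<lambda>n. \<Sum>r\<in>{1..<b}. \<bar>G r n / real n\<bar>) \<longlonglongrightarrow> 0"
    proof (rule tendsto_null_sum)
      fix r assume "r \<in> {1..<b}"
      hence "(\<lambda>m. G r m / real m) \<longlonglongrightarrow> 0" using G by simp
      thus "(\<lambda>n. \<bar>G r n / real n\<bar>) \<longlonglongrightarrow> 0" by (rule tendsto_rabs_zero)
    qed
    moreover have "(\<Sum>r\<in>{1..<b}. \<bar>G r n / real n\<bar>) = E n / real n" for n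
      by (simp add: E_def sum_divide_distrib)
    ultimately show ?thesis by simp
  qed
  have low_lim: "(\<lambda>n. D / real b - \<bar>D\<bar> / real n - E n / real n) \<longlonglongrightarrow> D / real b"
    using tendsto_diff[OF tendsto_diff[OF tendsto_const lim_const_over_n[of "\<bar>D\<bar>"]] E_lim] by simp
  define L where "L = liminf (\<lambda>n. ereal (chan_MI (P n) Zs / real n))"
  have Llow: "ereal (D / real b) \<le> L"
  proof -
    have "ereal (D / real b) = liminf (\<lambda>n. ereal (D / real b - \<bar>D\<bar> / real n - E n / real n))"
      by (rule lim_imp_Liminf[symmetric]) (use low_lim in auto)
    also have "\<dots> \<le> L" unfolding L_def
      by (rule Liminf_mono) (use low_bound in \<open>auto simp: I_def eventually_sequentially\<close>)
    finally show ?thesis .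
  qed
  have Lup: "L \<le> ereal (I b / real b)"
  proof -
    have sm: "strict_mono (\<lambda>t. Suc t * b)" using b1 by (auto simp: strict_mono_def)
    have "L \<le> liminf ((\<lambda>n. ereal (chan_MI (P n) Zs / real n)) \<circ> (\<lambda>t. Suc t * b))"
      unfolding L_def by (rule liminf_subseq_mono[OF sm])
    also have "\<dots> \<le> liminf (\<lambda>t. ereal (I b / real b))"
    proof (rule Liminf_mono, rule always_eventually, rule allI)
      fix t
      have "I (Suc t * b) \<le> real (Suc t) * I b" by (rule upper) simp
      hence "I (Suc t * b) / real (Suc t * b) \<le> real (Suc t) * I b / real (Suc t * b)"
        by (rule divide_right_mono) simp
      also have "\<dots> = I b / real b"
      proof -
        have bp: "real b > 0" using b1 by auto
        hence "real b + real t * real b > 0" by (simp add: add_pos_nonneg)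
        thus ?thesis using bp by (simp add: field_simps)
      qed
      finally show "((\<lambda>n. ereal (chan_MI (P n) Zs / real n)) \<circ> (\<lambda>t. Suc t * b)) t \<le> ereal (I b / real b)"
        by (simp add: I_def)
    qed
    also have "\<dots> = ereal (I b / real b)" by (simp add: Liminf_const)
    finally show ?thesis .
  qed
  obtain l where l: "L = ereal l" using Llow Lup by (cases L) auto
  have pm: "proc_MI P Zs = l" by (simp add: proc_MI_def L_def[symmetric] l)
  have "D / real b \<le> l" "l \<le> I b / real b" using Llow Lup l by auto
  hence "\<bar>l - I b / real b\<bar> \<le> \<alpha> b / real b"
    using alpha_nn b1 by (simp add: D_def diff_divide_distrib abs_le_iff)
  moreover have "(\<lambda>m. \<alpha> m / real m) \<longlonglongrightarrow> 0" using a4b by (simp add: adm4b_def)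
  ultimately show ?thesis by (simp add: pm I_def)
qed

end
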